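(* Assume $0<a,b<1$, $r>2$, $s>2$, $r>as$, $s>br$, and let $\alpha\in(\tilde\alpha,1)$, $\beta\in(\tilde\beta,1)$. (a) $T_{\alpha,\beta}$ maps $D_{\alpha,\beta}$ into $D_{\alpha,\beta}$, and for every $h\in(0,\min\{\underline c_1(\alpha,\beta),\underline c_2(\alpha,\beta)\})$ it maps $D_{\alpha,\beta}(h)$ into $D_{\alpha,\beta}(h)$. (b) If $1>\tilde\alpha_1\ge\tilde\alpha_2>\tilde\alpha$ and $1>\tilde\beta_1\ge\tilde\beta_2>\tilde\beta$, then $T_{\tilde\alpha_1,\tilde\beta_1}$ maps $D_{\tilde\alpha_2,\tilde\beta_2}$ into $D_{\tilde\alpha_2,\tilde\beta_2}$, and maps $D_{\tilde\alpha_2,\tilde\beta_2}(h)$ into $D_{\tilde\alpha_2,\tilde\beta_2}(h)$ for every $h\in(0,\min\{\underline c_1(\tilde\alpha_2,\tilde\beta_2),\underline c_2(\tilde\alpha_2,\tilde\beta_2)\})$.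
   Context: Let $f(\alpha,x,y)=x[(1-\alpha)e^{r-x-ay}+\alpha]$, $g(\beta,x,y)=y[(1-\beta)e^{s-bx-y}+\beta]$, $T_{\alpha,\beta}(x,y)=(f(\alpha,x,y),g(\beta,x,y))$. Define $\mathcal H_1(\alpha)=\max\{(1-\alpha)e^{r-1}+2\alpha,\,r\}$, $\mathcal H_2(\beta)=\max\{(1-\beta)e^{s-1}+2\beta,\,s\}$, $c_1(\beta)=r-a\mathcal H_2(\beta)$, $c_2(\alpha)=s-b\mathcal H_1(\alpha)$, $\tilde\alpha=\max\{\frac{e^{r-1}-s/b}{e^{r-1}-2},0\}$, $\tilde\beta=\max\{\frac{e^{s-1}-r/a}{e^{s-1}-2},0\}$. For $\alpha\in(\tilde\alpha,1)$, $\beta\in(\tilde\beta,1)$: $\underline c_1(\alpha,\beta)=\min\{f(\alpha,x,y):x\in[c_1(\beta),\mathcal H_1(\alpha)],y\in[0,\mathcal H_2(\beta)]\}$, $\underline c_2(\alpha,\beta)=\min\{g(\beta,x,y):x\in[0,\mathcal H_1(\alpha)],y\in[c_2(\alpha),\mathcal H_2(\beta)]\}$ (both are positive), $D_{\alpha,\beta}=[\underline c_1(\alpha,\beta),\mathcal H_1(\alpha)]\times[\underline c_2(\alpha,\beta),\mathcal H_2(\beta)]$ and, for $h\in(0,\min\{\underline c_1(\alpha,\beta),\underline c_2(\alpha,\beta)\})$, $D_{\alpha,\beta}(h)=[\underline c_1(\alpha,\beta)-h,\mathcal H_1(\alpha)]\times[\underline c_2(\alpha,\beta)-h,\mathcal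 H_2(\beta)]$. *)

theory Defs
  imports "HOL-Analysis.Analysis"
begin

definition f_map :: "real \<Rightarrow> real \<Rightarrow> real \<Rightarrow> real \<Rightarrow> real \<Rightarrow> real" where
  "f_map r a \<alpha> x y = x * ((1 - \<alpha>) * exp (r - x - a * y) + \<alpha>)"

definition g_map :: "real \<Rightarrow> real \<Rightarrow> real \<Rightarrow> real \<Rightarrow> real \<Rightarrow> real" where
  "g_map s b \<beta> x y = y * ((1 - \<beta>) * exp (s - b * x - y) + \<beta>)"

definition T_map :: "real \<Rightarrow> real \<Rightarrow> real \<Rightarrow> real \<Rightarrow> real \<Rightarrow> real \<Rightarrow>
    real \<times> real \<Rightarrow> real \<times> real" where
  "T_map r s a b \<alpha> \<beta> p = (f_map r a \<alpha> (fst p) (snd p), g_map s b \<beta> (fst p) (snd p))"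

definition H1 :: "real \<Rightarrow> real \<Rightarrow> real" where
  "H1 r \<alpha> = max ((1 - \<alpha>) * exp (r - 1) + 2 * \<alpha>) r"

definition H2 :: "real \<Rightarrow> real \<Rightarrow> real" where
  "H2 s \<beta> = max ((1 - \<beta>) * exp (s - 1) + 2 * \<beta>) s"

definition c1 :: "real \<Rightarrow> real \<Rightarrow> real \<Rightarrow> real \<Rightarrow> real" where
  "c1 r s a \<beta> = r - a * H2 s \<beta>"

definition c2 :: "real \<Rightarrow> real \<Rightarrow> real \<Rightarrow> real \<Rightarrow> real" where
  "c2 r s b \<alpha> = s - b * H1 r \<alpha>"

definition alpha_tilde :: "real \<Rightarrow> real \<Rightarrow> real \<Rightarrow> real" where
  "alpha_tilde r s b = max ((exp (r - 1) - s / b) / (exp (r - 1) - 2)) 0"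

definition beta_tilde :: "real \<Rightarrow> real \<Rightarrow> real \<Rightarrow> real" where
  "beta_tilde r s a = max ((exp (s - 1) - r / a) / (exp (s - 1) - 2)) 0"

text \<open>Minima of continuous functions over compact rectangles, written as infima
  (which are attained).\<close>

definition c1_low :: "real \<Rightarrow> real \<Rightarrow> real \<Rightarrow> real \<Rightarrow> real \<Rightarrow> real \<Rightarrow> real" where
  "c1_low r s a b \<alpha> \<beta> =
     Inf ((\<lambda>(x, y). f_map r a \<alpha> x y) ` ({c1 r s a \<beta> .. H1 r \<alpha>} \<times> {0 .. H2 s \<beta>}))"

definition c2_low :: "real \<Rightarrow> real \<Rightarrow> real \<Rightarrow> real \<Rightarrow> real \<Rightarrow> real \<Rightarrow> real" where
  "c2_low r s a b \<alpha> \<beta> =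
     Inf ((\<lambda>(x, y). g_map s b \<beta> x y) ` ({0 .. H1 r \<alpha>} \<times> {c2 r s b \<alpha> .. H2 s \<beta>}))"

definition D_set :: "real \<Rightarrow> real \<Rightarrow> real \<Rightarrow> real \<Rightarrow> real \<Rightarrow> real \<Rightarrow> (real \<times> real) set" where
  "D_set r s a b \<alpha> \<beta> = {c1_low r s a b \<alpha> \<beta> .. H1 r \<alpha>} \<times> {c2_low r s a b \<alpha> \<beta> .. H2 s \<beta>}"

definition D_h :: "real \<Rightarrow> real \<Rightarrow> real \<Rightarrow> real \<Rightarrow> real \<Rightarrow> real \<Rightarrow> real \<Rightarrow> (real \<times> real) set" where
  "D_h r s a b \<alpha> \<beta> h =
     {c1_low r s a b \<alpha> \<beta> - h .. H1 r \<alpha>} \<times> {c2_low r s a b \<alpha> \<beta> - h .. H2 s \<beta>}"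

end

theory Submission
  imports Defs
begin

lemma phi_convex: "convex_on {2..} (\<lambda>x::real. x * exp (r - x))"
proof (rule f''_ge0_imp_convex[where f'="\<lambda>x. (1 - x) * exp (r - x)" and f''="\<lambda>x. (x - 2) * exp (r - x)"])
  show "convex {2::real..}" by simp
  show "DERIV (\<lambda>x::real. x * exp (r - x)) x :> (1 - x) * exp (r - x)" for x
    by (rule derivative_eq_intros refl | simp add: algebra_simps)+
  show "DERIV (\<lambda>x::real. (1 - x) * exp (r - x)) x :> (x - 2) * exp (r - x)" for x
    by (rule derivative_eq_intros refl | simp add: algebra_simps)+
  show "x \<in> {2..} \<Longrightarrow> 0 \<le> (x - 2) * exp (r - x)" for x by simp
qed

lemma xexp_le: "(x::real) * exp (r - x) \<le> exp (r - 1)"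
proof -
  have "x \<le> exp (x - 1)" using exp_ge_add_one_self[of "x-1"] by simp
  hence "x * exp (r - x) \<le> exp (x - 1) * exp (r - x)" by (simp add: mult_right_mono)
  also have "\<dots> = exp (r - 1)" by (simp add: exp_add[symmetric])
  finally show ?thesis .
qed

lemma psi_bound:
  fixes r \<alpha> x :: real
  assumes r: "r > 2" and a0: "0 \<le> \<alpha>" and a1: "\<alpha> < 1" and x0: "0 \<le> x" and xH: "x \<le> H1 r \<alpha>"
  shows "x * ((1 - \<alpha>) * exp (r - x) + \<alpha>) \<le> H1 r \<alpha>"
proof -
  let ?A = "(1 - \<alpha>) * exp (r - 1) + 2 * \<alpha>"
  have HA: "?A \<le> H1 r \<alpha>" and Hr: "r \<le> H1 r \<alpha>" by (auto simp: H1_def)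
  have eq: "x * ((1 - \<alpha>) * exp (r - x) + \<alpha>) = (1 - \<alpha>) * (x * exp (r - x)) + \<alpha> * x"
    by (simp add: algebra_simps)
  have p2: "(1 - \<alpha>) * (2 * exp (r - 2)) + \<alpha> * 2 \<le> ?A"
  proof -
    have "2 * exp (r - 2) \<le> exp (r - 1)" using xexp_le[of 2 r] by simp
    thus ?thesis using a1 by (simp add: mult_left_mono)
  qed
  show ?thesis
  proof (cases "x \<le> 2")
    case True
    have "(1 - \<alpha>) * (x * exp (r - x)) \<le> (1 - \<alpha>) * exp (r - 1)"
      using xexp_le[of x r] a1 by (simp add: mult_left_mono)
    moreover have "\<alpha> * x \<le> \<alpha> * 2" using True a0 by (simp add: mult_left_mono)
    ultimately show ?thesis using eq HA by linarith
  next
    case False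
    show ?thesis
    proof (cases "x \<ge> r")
      case True
      have "exp (r - x) \<le> 1" using True by simp
      hence "x * exp (r - x) \<le> x" using x0 mult_left_mono[of "exp (r - x)" 1 x] by simp
      hence "(1 - \<alpha>) * (x * exp (r - x)) \<le> (1 - \<alpha>) * x"
        using a1 by (simp add: mult_left_mono)
      thus ?thesis using eq xH by (simp add: algebra_simps)
    next
      case xr: False
      define t where "t = (x - 2) / (r - 2)"
      have t0: "0 \<le> t" and t1: "t \<le> 1" using False xr r by (auto simp: t_def field_simps)
      have "t * (r - 2) = x - 2" using r by (simp add: t_def)
      hence xt: "x = (1 - t) * 2 + t * r" by (simp add: algebra_simps)
      have "(\<lambda>x::real. x * exp (r - x)) ((1 - t) *\<^sub>R 2 + t *\<^sub>R r)
             \<le> (1 - t) * (2 * exp (r - 2)) + t * (r * exp (r - r))"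
        using convex_onD[OF phi_convex[of r], of t 2 r] t0 t1 r by simp
      hence c: "x * exp (r - x) \<le> (1 - t) * (2 * exp (r - 2)) + t * r"
        using xt by simp
      have "(1 - \<alpha>) * (x * exp (r - x)) + \<alpha> * x
          \<le> (1 - \<alpha>) * ((1 - t) * (2 * exp (r - 2)) + t * r) + \<alpha> * ((1 - t) * 2 + t * r)"
        using c a1 xt by (simp add: mult_left_mono)
      also have "\<dots> = (1 - t) * ((1 - \<alpha>) * (2 * exp (r - 2)) + \<alpha> * 2) + t * r"
        by (simp add: algebra_simps)
      also have "\<dots> \<le> (1 - t) * H1 r \<alpha> + t * H1 r \<alpha>"
        using p2 HA Hr t0 t1 by (intro add_mono mult_left_mono) auto
      also have "\<dots> = H1 r \<alpha>" by (simp add: algebra_simps)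
      finally show ?thesis using eq by simp
    qed
  qed
qed

lemma key:
  fixes r a \<alpha> \<alpha>2 K L x y :: real
  assumes r: "r > 2" and a: "0 < a" and a20: "0 \<le> \<alpha>2" and a2a: "\<alpha>2 \<le> \<alpha>" and a1: "\<alpha> < 1"
    and low: "\<And>x' y'. r - a * K \<le> x' \<Longrightarrow> x' \<le> H1 r \<alpha>2 \<Longrightarrow> 0 \<le> y' \<Longrightarrow> y' \<le> K
               \<Longrightarrow> L \<le> f_map r a \<alpha>2 x' y'"
    and L: "0 < L" and xL: "L \<le> x" and xH: "x \<le> H1 r \<alpha>2" and y0: "0 \<le> y" and yK: "y \<le> K"
  shows "L \<le> f_map r a \<alpha> x y \<and> f_map r a \<alpha> x y \<le> H1 r \<alpha>2"
proof -
  define E where "E = exp (r - x - a * y)"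
  have x0: "0 \<le> x" using L xL by simp
  have fa: "f_map r a \<alpha> x y = x * ((1 - \<alpha>) * E + \<alpha>)" by (simp add: f_map_def E_def)
  have fa2: "f_map r a \<alpha>2 x y = x * ((1 - \<alpha>2) * E + \<alpha>2)" by (simp add: f_map_def E_def)
  have d1: "f_map r a \<alpha> x y - f_map r a \<alpha>2 x y = (x * (\<alpha> - \<alpha>2)) * (1 - E)"
    by (simp add: fa fa2 algebra_simps)
  have d2: "f_map r a \<alpha> x y - x = (x * (1 - \<alpha>)) * (E - 1)"
    by (simp add: fa algebra_simps)
  have p1: "0 \<le> x * (\<alpha> - \<alpha>2)" using x0 a2a by simp
  have p2: "0 \<le> x * (1 - \<alpha>)" using x0 a1 by simp
  have up2: "f_map r a \<alpha>2 x y \<le> H1 r \<alpha>2"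
  proof -
    have "E \<le> exp (r - x)" using a y0 by (simp add: E_def)
    hence "(1 - \<alpha>2) * E + \<alpha>2 \<le> (1 - \<alpha>2) * exp (r - x) + \<alpha>2"
      using a2a a1 by (simp add: mult_left_mono)
    hence "f_map r a \<alpha>2 x y \<le> x * ((1 - \<alpha>2) * exp (r - x) + \<alpha>2)"
      using fa2 x0 by (simp add: mult_left_mono)
    also have "\<dots> \<le> H1 r \<alpha>2" using psi_bound[OF r a20 _ x0 xH] a2a a1 by simp
    finally show ?thesis .
  qed
  show ?thesis
  proof (cases "E \<le> 1")
    case True
    have A: "f_map r a \<alpha> x y \<le> x" using d2 p2 True mult_nonneg_nonpos[OF p2, of "E - 1"] by simp
    have B: "f_map r a \<alpha> x y \<ge> f_map r a \<alpha>2 x y" using d1 mult_nonneg_nonneg[OF p1, of "1 - E"] True by simp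
    have "r - a * K \<le> x"
    proof (rule ccontr)
      assume "\<not> r - a * K \<le> x"
      moreover have "a * y \<le> a * K" using a yK by simp
      ultimately have "0 < r - x - a * y" by linarith
      hence "1 < E" by (simp add: E_def)
      thus False using True by simp
    qed
    hence "L \<le> f_map r a \<alpha>2 x y" using low xH y0 yK by blast
    thus ?thesis using A B xH by linarith
  next
    case False
    have A: "f_map r a \<alpha> x y \<ge> x" using d2 mult_nonneg_nonneg[OF p2, of "E - 1"] False by simp
    have B: "f_map r a \<alpha> x y \<le> f_map r a \<alpha>2 x y" using d1 mult_nonneg_nonpos[OF p1, of "1 - E"] False by simp
    show ?thesis using A B up2 xL by linarith
  qed
qed

lemma low_f:
  fixes r a \<alpha> K :: real
  assumes a0: "0 < \<alpha>" and a1: "\<alpha> < 1" and a: "0 < a" and K: "0 \<le> K" and C: "0 < r - a * K"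
  defines "S \<equiv> (\<lambda>(x, y). f_map r a \<alpha> x y) ` ({r - a * K .. H1 r \<alpha>} \<times> {0 .. K})"
  shows "\<alpha> * (r - a * K) \<le> Inf S"
    and "\<And>x y. r - a * K \<le> x \<Longrightarrow> x \<le> H1 r \<alpha> \<Longrightarrow> 0 \<le> y \<Longrightarrow> y \<le> K \<Longrightarrow> Inf S \<le> f_map r a \<alpha> x y"
proof -
  have lb: "\<alpha> * (r - a * K) \<le> f_map r a \<alpha> x y" if "r - a * K \<le> x" for x y
  proof -
    have x0: "0 \<le> x" using that C by simp
    have "0 \<le> (1 - \<alpha>) * exp (r - x - a * y)" using a1 by simp
    hence "\<alpha> \<le> (1 - \<alpha>) * exp (r - x - a * y) + \<alpha>" by simp
    hence "x * \<alpha> \<le> f_map r a \<alpha> x y" unfolding f_map_def using x0 by (rule mult_left_mono)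
    moreover have "\<alpha> * (r - a * K) \<le> \<alpha> * x" using that a0 by simp
    ultimately show ?thesis by (simp add: mult.commute)
  qed
  have Hr: "r \<le> H1 r \<alpha>" by (simp add: H1_def)
  have "0 \<le> a * K" using K a by simp
  hence "r - a * K \<le> H1 r \<alpha>" using Hr by linarith
  hence ne: "S \<noteq> {}" unfolding S_def using K by auto
  have bdd: "bdd_below S" unfolding S_def bdd_below_def using lb by fastforce
  show "\<alpha> * (r - a * K) \<le> Inf S"
    using ne by (rule cInf_greatest) (auto simp: S_def intro: lb)
  show "Inf S \<le> f_map r a \<alpha> x y" if "r - a * K \<le> x" "x \<le> H1 r \<alpha>" "0 \<le> y" "y \<le> K" for x y
  proof (rule cInf_lower[OF _ bdd])
    show "f_map r a \<alpha> x y \<in> S" unfolding S_def using that by force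
  qed
qed

lemma swap_img:
  "(\<lambda>(x, y). g_map s b \<beta> x y) ` (A \<times> B) = (\<lambda>(x, y). f_map s b \<beta> x y) ` (B \<times> A)"
proof -
  have "(\<lambda>(x, y). g_map s b \<beta> x y) ` (A \<times> B) = (\<lambda>(x, y). f_map s b \<beta> x y) ` (prod.swap ` (A \<times> B))"
    by (simp add: image_image g_map_def f_map_def case_prod_beta algebra_simps)
  thus ?thesis by (simp add: product_swap)
qed

lemma H_pos:
  fixes r s a :: real
  assumes s: "s > 2" and a: "0 < a" and ras: "r > a * s" and b1: "beta_tilde r s a < \<beta>" and b2: "\<beta> < 1"
  shows "0 < r - a * H2 s \<beta>"
proof -
  have e: "exp (s - 1) > 2" using exp_ge_add_one_self[of "s - 1"] s by simp
  have "(exp (s - 1) - r / a) / (exp (s - 1) - 2) < \<beta>" using b1 by (simp add: beta_tilde_def)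
  hence "exp (s - 1) - r / a < \<beta> * (exp (s - 1) - 2)" using e by (simp add: divide_less_eq)
  hence A: "(1 - \<beta>) * exp (s - 1) + 2 * \<beta> < r / a" by (simp add: algebra_simps)
  have "s < r / a" using ras a by (simp add: less_divide_eq mult.commute)
  hence "H2 s \<beta> < r / a" using A by (simp add: H2_def)
  thus ?thesis using a by (simp add: less_divide_eq mult.commute)
qed

lemma tilde_nonneg: "0 \<le> beta_tilde r s a" "0 \<le> alpha_tilde r s b"
  by (simp_all add: beta_tilde_def alpha_tilde_def)

lemma alpha_beta_tilde: "alpha_tilde r s b = beta_tilde s r b"
  by (simp add: beta_tilde_def alpha_tilde_def)

lemma H12: "H2 s \<beta> = H1 s \<beta>" by (simp add: H1_def H2_def)

lemma lows:
  fixes r s a b :: real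
  assumes "0 < a" "a < 1" "0 < b" "b < 1" "r > 2" "s > 2" "r > a * s" "s > b * r"
    and al: "alpha_tilde r s b < \<alpha>2" "\<alpha>2 < 1" and be: "beta_tilde r s a < \<beta>2" "\<beta>2 < 1"
  shows "0 < c1_low r s a b \<alpha>2 \<beta>2"
    and "\<And>x y. r - a * H2 s \<beta>2 \<le> x \<Longrightarrow> x \<le> H1 r \<alpha>2 \<Longrightarrow> 0 \<le> y \<Longrightarrow> y \<le> H2 s \<beta>2
          \<Longrightarrow> c1_low r s a b \<alpha>2 \<beta>2 \<le> f_map r a \<alpha>2 x y"
    and "0 < c2_low r s a b \<alpha>2 \<beta>2"
    and "\<And>x y. s - b * H1 r \<alpha>2 \<le> y \<Longrightarrow> y \<le> H1 s \<beta>2 \<Longrightarrow> 0 \<le> x \<Longrightarrow> x \<le> H1 r \<alpha>2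
          \<Longrightarrow> c2_low r s a b \<alpha>2 \<beta>2 \<le> f_map s b \<beta>2 y x"
proof -
  have a0: "0 < \<alpha>2" using al tilde_nonneg(2)[of r s b] by linarith
  have b0: "0 < \<beta>2" using be tilde_nonneg(1)[of r s a] by linarith
  have K1: "0 \<le> H2 s \<beta>2" using assms by (simp add: H2_def)
  have K2: "0 \<le> H1 r \<alpha>2" using assms by (simp add: H1_def)
  have C1: "0 < r - a * H2 s \<beta>2" using H_pos[of s a r \<beta>2] assms by simp
  have C2: "0 < s - b * H1 r \<alpha>2" using H_pos[of r b s \<alpha>2] assms by (simp add: alpha_beta_tilde H12 mult.commute)
  have e1: "c1_low r s a b \<alpha>2 \<beta>2 = Inf ((\<lambda>(x, y). f_map r a \<alpha>2 x y) ` ({r - a * H2 s \<beta>2 .. H1 r \<alpha>2} \<times> {0 .. H2 s \<beta>2}))"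
    by (simp add: c1_low_def c1_def)
  have e2: "c2_low r s a b \<alpha>2 \<beta>2 = Inf ((\<lambda>(x, y). f_map s b \<beta>2 x y) ` ({s - b * H1 r \<alpha>2 .. H1 s \<beta>2} \<times> {0 .. H1 r \<alpha>2}))"
    by (simp add: c2_low_def c2_def swap_img H12)
  have "0 < \<alpha>2 * (r - a * H2 s \<beta>2)" using a0 C1 by simp
  thus "0 < c1_low r s a b \<alpha>2 \<beta>2" unfolding e1 using low_f(1)[OF a0 al(2) assms(1) K1 C1] by linarith
  show "c1_low r s a b \<alpha>2 \<beta>2 \<le> f_map r a \<alpha>2 x y" if "r - a * H2 s \<beta>2 \<le> x" "x \<le> H1 r \<alpha>2" "0 \<le> y" "y \<le> H2 s \<beta>2" for x y
    unfolding e1 using low_f(2)[OF a0 al(2) assms(1) K1 C1] that by blast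
  have "0 < \<beta>2 * (s - b * H1 r \<alpha>2)" using b0 C2 by simp
  thus "0 < c2_low r s a b \<alpha>2 \<beta>2" unfolding e2 using low_f(1)[OF b0 be(2) assms(3) K2 C2] by linarith
  show "c2_low r s a b \<alpha>2 \<beta>2 \<le> f_map s b \<beta>2 y x" if "s - b * H1 r \<alpha>2 \<le> y" "y \<le> H1 s \<beta>2" "0 \<le> x" "x \<le> H1 r \<alpha>2" for x y
    unfolding e2 using low_f(2)[OF b0 be(2) assms(3) K2 C2] that by blast
qed

lemma gen:
  fixes r s a b :: real
  assumes h: "0 < a" "a < 1" "0 < b" "b < 1" "r > 2" "s > 2" "r > a * s" "s > b * r"
    and al: "alpha_tilde r s b < \<alpha>2" "\<alpha>2 \<le> \<alpha>" "\<alpha> < 1"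
    and be: "beta_tilde r s a < \<beta>2" "\<beta>2 \<le> \<beta>" "\<beta> < 1"
    and L1: "0 < L1" "L1 \<le> c1_low r s a b \<alpha>2 \<beta>2"
    and L2: "0 < L2" "L2 \<le> c2_low r s a b \<alpha>2 \<beta>2"
  shows "T_map r s a b \<alpha> \<beta> ` ({L1 .. H1 r \<alpha>2} \<times> {L2 .. H2 s \<beta>2}) \<subseteq> {L1 .. H1 r \<alpha>2} \<times> {L2 .. H2 s \<beta>2}"
proof
  fix p assume "p \<in> T_map r s a b \<alpha> \<beta> ` ({L1 .. H1 r \<alpha>2} \<times> {L2 .. H2 s \<beta>2})"
  then obtain x y where p: "p = T_map r s a b \<alpha> \<beta> (x, y)" and x: "L1 \<le> x" "x \<le> H1 r \<alpha>2"
    and y: "L2 \<le> y" "y \<le> H2 s \<beta>2" by auto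
  have a2: "\<alpha>2 < 1" "0 \<le> \<alpha>2" using al tilde_nonneg(2)[of r s b] by linarith+
  have b2: "\<beta>2 < 1" "0 \<le> \<beta>2" using be tilde_nonneg(1)[of r s a] by linarith+
  note lw = lows[OF h al(1) a2(1) be(1) b2(1)]
  have F: "L1 \<le> f_map r a \<alpha> x y \<and> f_map r a \<alpha> x y \<le> H1 r \<alpha>2"
  proof (rule key[OF h(5) h(1) a2(2) al(2) al(3) _ L1(1) x(1) x(2) _ y(2)])
    show "L1 \<le> f_map r a \<alpha>2 x' y'" if "r - a * H2 s \<beta>2 \<le> x'" "x' \<le> H1 r \<alpha>2" "0 \<le> y'" "y' \<le> H2 s \<beta>2" for x' y'
      using lw(2)[OF that] L1(2) by linarith
    show "0 \<le> y" using y L2 by linarith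
  qed
  have G: "L2 \<le> f_map s b \<beta> y x \<and> f_map s b \<beta> y x \<le> H1 s \<beta>2"
  proof (rule key[OF h(6) h(3) b2(2) be(2) be(3) _ L2(1) y(1) _ _ x(2)])
    show "L2 \<le> f_map s b \<beta>2 x' y'" if "s - b * H1 r \<alpha>2 \<le> x'" "x' \<le> H1 s \<beta>2" "0 \<le> y'" "y' \<le> H1 r \<alpha>2" for x' y'
      using lw(4)[OF that] L2(2) by linarith
    show "y \<le> H1 s \<beta>2" using y(2) by (simp add: H12)
    show "0 \<le> x" using x L1 by linarith
  qed
  have "g_map s b \<beta> x y = f_map s b \<beta> y x" by (simp add: g_map_def f_map_def algebra_simps)
  thus "p \<in> {L1 .. H1 r \<alpha>2} \<times> {L2 .. H2 s \<beta>2}" using F G p by (simp add: T_map_def H12)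
qed

theorem mainTheorem3:
  fixes r s a b :: real
  assumes "0 < a" "a < 1" "0 < b" "b < 1" "r > 2" "s > 2" "r > a * s" "s > b * r"
  shows
   "(\<forall>\<alpha> \<beta>. alpha_tilde r s b < \<alpha> \<and> \<alpha> < 1 \<and> beta_tilde r s a < \<beta> \<and> \<beta> < 1 \<longrightarrow>
        T_map r s a b \<alpha> \<beta> ` D_set r s a b \<alpha> \<beta> \<subseteq> D_set r s a b \<alpha> \<beta> \<and>
        (\<forall>h. 0 < h \<and> h < min (c1_low r s a b \<alpha> \<beta>) (c2_low r s a b \<alpha> \<beta>) \<longrightarrow>
           T_map r s a b \<alpha> \<beta> ` D_h r s a b \<alpha> \<beta> h \<subseteq> D_h r s a b \<alpha> \<beta> h))
    \<and>
    (\<forall>\<alpha>1 \<alpha>2 \<beta>1 \<beta>2. 1 > \<alpha>1 \<and> \<alpha>1 \<ge> \<alpha>2 \<and> \<alpha>2 > alpha_tilde r s b \<and>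
                      1 > \<beta>1 \<and> \<beta>1 \<ge> \<beta>2 \<and> \<beta>2 > beta_tilde r s a \<longrightarrow>
        T_map r s a b \<alpha>1 \<beta>1 ` D_set r s a b \<alpha>2 \<beta>2 \<subseteq> D_set r s a b \<alpha>2 \<beta>2 \<and>
        (\<forall>h. 0 < h \<and> h < min (c1_low r s a b \<alpha>2 \<beta>2) (c2_low r s a b \<alpha>2 \<beta>2) \<longrightarrow>
           T_map r s a b \<alpha>1 \<beta>1 ` D_h r s a b \<alpha>2 \<beta>2 h \<subseteq> D_h r s a b \<alpha>2 \<beta>2 h))"
proof -
  have G: "T_map r s a b \<alpha>1 \<beta>1 ` D_set r s a b \<alpha>2 \<beta>2 \<subseteq> D_set r s a b \<alpha>2 \<beta>2 \<and>
        (\<forall>h. 0 < h \<and> h < min (c1_low r s a b \<alpha>2 \<beta>2) (c2_low r s a b \<alpha>2 \<beta>2) \<longrightarrow>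
           T_map r s a b \<alpha>1 \<beta>1 ` D_h r s a b \<alpha>2 \<beta>2 h \<subseteq> D_h r s a b \<alpha>2 \<beta>2 h)"
    if c: "1 > \<alpha>1" "\<alpha>1 \<ge> \<alpha>2" "\<alpha>2 > alpha_tilde r s b" "1 > \<beta>1" "\<beta>1 \<ge> \<beta>2" "\<beta>2 > beta_tilde r s a"
    for \<alpha>1 \<alpha>2 \<beta>1 \<beta>2
  proof -
    have a2: "\<alpha>2 < 1" using c by linarith
    have b2: "\<beta>2 < 1" using c by linarith
    note lw = lows[OF assms c(3) a2 c(6) b2]
    note g = gen[OF assms c(3) c(2) c(1) c(6) c(5) c(4)]
    show ?thesis
    proof
      show "T_map r s a b \<alpha>1 \<beta>1 ` D_set r s a b \<alpha>2 \<beta>2 \<subseteq> D_set r s a b \<alpha>2 \<beta>2"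
        unfolding D_set_def using g[OF lw(1) order_refl lw(3) order_refl] .
      show "\<forall>h. 0 < h \<and> h < min (c1_low r s a b \<alpha>2 \<beta>2) (c2_low r s a b \<alpha>2 \<beta>2) \<longrightarrow>
           T_map r s a b \<alpha>1 \<beta>1 ` D_h r s a b \<alpha>2 \<beta>2 h \<subseteq> D_h r s a b \<alpha>2 \<beta>2 h"
      proof (intro allI impI)
        fix h assume "0 < h \<and> h < min (c1_low r s a b \<alpha>2 \<beta>2) (c2_low r s a b \<alpha>2 \<beta>2)"
        hence "0 < c1_low r s a b \<alpha>2 \<beta>2 - h" "c1_low r s a b \<alpha>2 \<beta>2 - h \<le> c1_low r s a b \<alpha>2 \<beta>2"
          "0 < c2_low r s a b \<alpha>2 \<beta>2 - h" "c2_low r s a b \<alpha>2 \<beta>2 - h \<le> c2_low r s a b \<alpha>2 \<beta>2" by auto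
        from g[OF this] show "T_map r s a b \<alpha>1 \<beta>1 ` D_h r s a b \<alpha>2 \<beta>2 h \<subseteq> D_h r s a b \<alpha>2 \<beta>2 h"
          unfolding D_h_def .
      qed
    qed
  qed
  show ?thesis
  proof
    show "\<forall>\<alpha> \<beta>. alpha_tilde r s b < \<alpha> \<and> \<alpha> < 1 \<and> beta_tilde r s a < \<beta> \<and> \<beta> < 1 \<longrightarrow>
        T_map r s a b \<alpha> \<beta> ` D_set r s a b \<alpha> \<beta> \<subseteq> D_set r s a b \<alpha> \<beta> \<and>
        (\<forall>h. 0 < h \<and> h < min (c1_low r s a b \<alpha> \<beta>) (c2_low r s a b \<alpha> \<beta>) \<longrightarrow>
           T_map r s a b \<alpha> \<beta> ` D_h r s a b \<alpha> \<beta> h \<subseteq> D_h r s a b \<alpha> \<beta> h)"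
      using G[OF _ order_refl _ _ order_refl] by blast
    show "\<forall>\<alpha>1 \<alpha>2 \<beta>1 \<beta>2. 1 > \<alpha>1 \<and> \<alpha>1 \<ge> \<alpha>2 \<and> \<alpha>2 > alpha_tilde r s b \<and>
                      1 > \<beta>1 \<and> \<beta>1 \<ge> \<beta>2 \<and> \<beta>2 > beta_tilde r s a \<longrightarrow>
        T_map r s a b \<alpha>1 \<beta>1 ` D_set r s a b \<alpha>2 \<beta>2 \<subseteq> D_set r s a b \<alpha>2 \<beta>2 \<and>
        (\<forall>h. 0 < h \<and> h < min (c1_low r s a b \<alpha>2 \<beta>2) (c2_low r s a b \<alpha>2 \<beta>2) \<longrightarrow>
           T_map r s a b \<alpha>1 \<beta>1 ` D_h r s a b \<alpha>2 \<beta>2 h \<subseteq> D_h r s a b \<alpha>2 \<beta>2 h)"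
      using G by blast
  qed
qed

end
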